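(* Let $n\ge1$, let $\preceq$ be an admissible order on $L([0,1])$ and let $F\colon L([0,1])^2\to L([0,1])$, $G\colon L([0,1])^n\to L([0,1])$. The interval-valued Sugeno-like $FG$-functional $\mathbf S_m^{F,G}$ is idempotent (i.e. $\mathbf S_m^{F,G}(X,\dots,X)=X$ for all $X\in L([0,1])$) for every IV fuzzy measure $m$ w.r.t. $\preceq$ whenever: (i) $F(X,\mathbf 1)=X$ for all $X\in L([0,1])$ and $G=\mathrm{Proj}_1$; or (ii) $F(X,\mathbf 1)=X$ for all $X\in L([0,1])$, $F$ is non-decreasing in the second variable and $G=\vee$; or (iii) $G$ is idempotent and $F(X,Y)=X$ for all $X,Y\in L([0,1])$.
   Context: $N=\{1,\dots,n\}$. $L([0,1])=\{[a,b]:0\le a\le b\le1\}$, $\mathbf0=[0,0]$, $\mathbf1=[1,1]$. An admissible order $\preceq$ is a total order on $L([0,1])$ such that $[a,b]\preceq[c,d]$ whenever $a\le c$ and $b\le d$. $\vee$ denotes the maximum w.r.t. $\preceq$; monotonicity is w.r.t. $\preceq$; $\mathrm{Proj}_1(X_1,\dots,X_n)=X_1$; $G$ idempotent means $G(X,\dots,X)=X$. An IV fuzzy measure w.r.t. $\preceq$ is $m\colon 2^N\to L([0,1])$ with $m(\emptyset)=\mathbf0$, $m(N)=\mathbf1$, $m(A)\preceq m(B)$ for $A\subseteq B$. For a permutation $\sigma$ of $N$, $E_{\sigma(i)}=\{\sigma(i),\dots,\sigma(n)\}$. The IV Sugeno-like $FG$-functional w.r.t. $m$ is $\mathbf S_m^{F,G}(X_1,\dots,X_n)=G\big(F(X_{\sigma(1)},m(E_{\sigma(1)})),\dots,F(X_{\sigma(n)},m(E_{\sigma(n)}))\big)$,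 where $\sigma$ is any permutation with $X_{\sigma(1)}\preceq\dots\preceq X_{\sigma(n)}$; it is defined when (Condition (WDS)) this value does not depend on the choice of such $\sigma$, for all inputs. *)

theory Defs
  imports Complex_Main "HOL-Combinatorics.Permutations"
begin

text \<open>Intervals [a,b] in [0,1] are represented as pairs (a,b) with 0 \<le> a \<le> b \<le> 1.\<close>
type_synonym ival = "real \<times> real"

definition LI :: "ival set" where
  "LI = {(a, b). 0 \<le> a \<and> a \<le> b \<and> b \<le> 1}"

definition izero :: ival where "izero = (0, 0)"
definition ione :: ival where "ione = (1, 1)"

definition admissible_order :: "(ival \<Rightarrow> ival \<Rightarrow> bool) \<Rightarrow> bool" where
  "admissible_order le \<longleftrightarrow>
     (\<forall>x\<in>LI. le x x) \<and>
     (\<forall>x\<in>LI. \<forall>y\<in>LI. le x y \<and> le y x \<longrightarrow> x = y) \<and>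
     (\<forall>x\<in>LI. \<forall>y\<in>LI. \<forall>z\<in>LI. le x y \<and> le y z \<longrightarrow> le x z) \<and>
     (\<forall>x\<in>LI. \<forall>y\<in>LI. le x y \<or> le y x) \<and>
     (\<forall>a b c d. (a, b) \<in> LI \<and> (c, d) \<in> LI \<and> a \<le> c \<and> b \<le> d \<longrightarrow> le (a, b) (c, d))"

definition iv_fuzzy_measure :: "(ival \<Rightarrow> ival \<Rightarrow> bool) \<Rightarrow> nat \<Rightarrow> (nat set \<Rightarrow> ival) \<Rightarrow> bool" where
  "iv_fuzzy_measure le n m \<longleftrightarrow>
     (\<forall>A. A \<subseteq> {1..n} \<longrightarrow> m A \<in> LI) \<and>
     m {} = izero \<and> m {1..n} = ione \<and>
     (\<forall>A B. A \<subseteq> B \<and> B \<subseteq> {1..n} \<longrightarrow> le (m A) (m B))"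

definition lmax :: "(ival \<Rightarrow> ival \<Rightarrow> bool) \<Rightarrow> ival list \<Rightarrow> ival" where
  "lmax le xs = (THE y. y \<in> set xs \<and> (\<forall>z\<in>set xs. le z y))"

definition sorting_perm :: "(ival \<Rightarrow> ival \<Rightarrow> bool) \<Rightarrow> nat \<Rightarrow> (nat \<Rightarrow> ival) \<Rightarrow> (nat \<Rightarrow> nat) \<Rightarrow> bool" where
  "sorting_perm le n X \<sigma> \<longleftrightarrow> \<sigma> permutes {1..n} \<and>
     (\<forall>i\<in>{1..n}. \<forall>j\<in>{1..n}. i \<le> j \<longrightarrow> le (X (\<sigma> i)) (X (\<sigma> j)))"

definition sugeno_val ::
  "nat \<Rightarrow> (nat set \<Rightarrow> ival) \<Rightarrow> (ival \<Rightarrow> ival \<Rightarrow> ival) \<Rightarrow> (ival list \<Rightarrow> ival)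
    \<Rightarrow> (nat \<Rightarrow> ival) \<Rightarrow> (nat \<Rightarrow> nat) \<Rightarrow> ival" where
  "sugeno_val n m F G X \<sigma> = G (map (\<lambda>i. F (X (\<sigma> i)) (m (\<sigma> ` {i..n}))) [1..<n+1])"

definition sugeno ::
  "(ival \<Rightarrow> ival \<Rightarrow> bool) \<Rightarrow> nat \<Rightarrow> (nat set \<Rightarrow> ival) \<Rightarrow> (ival \<Rightarrow> ival \<Rightarrow> ival)
    \<Rightarrow> (ival list \<Rightarrow> ival) \<Rightarrow> (nat \<Rightarrow> ival) \<Rightarrow> ival" where
  "sugeno le n m F G X = sugeno_val n m F G X (SOME \<sigma>. sorting_perm le n X \<sigma>)"

end

theory Submission
  imports Defs
begin

theorem proposition3:
  fixes le :: "ival \<Rightarrow> ival \<Rightarrow> bool"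
    and n :: nat
    and F :: "ival \<Rightarrow> ival \<Rightarrow> ival"
    and G :: "ival list \<Rightarrow> ival"
  assumes n: "n \<ge> 1"
    and adm: "admissible_order le"
    and F_range: "\<forall>X\<in>LI. \<forall>Y\<in>LI. F X Y \<in> LI"
    and G_range: "\<forall>xs. length xs = n \<and> set xs \<subseteq> LI \<longrightarrow> G xs \<in> LI"
    and cases:
      "((\<forall>X\<in>LI. F X ione = X) \<and>
          (\<forall>xs. length xs = n \<and> set xs \<subseteq> LI \<longrightarrow> G xs = hd xs))
       \<or> ((\<forall>X\<in>LI. F X ione = X) \<and>
          (\<forall>X\<in>LI. \<forall>Y\<in>LI. \<forall>Z\<in>LI. le Y Z \<longrightarrow> le (F X Y) (F X Z)) \<and>
          (\<forall>xs. length xs = n \<and> set xs \<subseteq> LI \<longrightarrow> G xs = lmax le xs))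
       \<or> ((\<forall>X\<in>LI. G (replicate n X) = X) \<and>
          (\<forall>X\<in>LI. \<forall>Y\<in>LI. F X Y = X))"
  shows "\<forall>m. iv_fuzzy_measure le n m \<longrightarrow>
           (\<forall>X\<in>LI. sugeno le n m F G (\<lambda>_. X) = X \<and>
              (\<forall>\<sigma>. sorting_perm le n (\<lambda>_. X) \<sigma> \<longrightarrow> sugeno_val n m F G (\<lambda>_. X) \<sigma> = X))"
proof (intro allI impI ballI)
  fix m X assume m: "iv_fuzzy_measure le n m" and X: "X \<in> LI"
  have mLI: "\<And>A. A \<subseteq> {1..n} \<Longrightarrow> m A \<in> LI" and m1: "m {1..n} = ione"
    and mmono: "\<And>A B. A \<subseteq> B \<Longrightarrow> B \<subseteq> {1..n} \<Longrightarrow> le (m A) (m B)"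
    using m unfolding iv_fuzzy_measure_def by blast+
  have refl: "\<forall>x\<in>LI. le x x"
    using adm unfolding admissible_order_def by (elim conjE) assumption
  have anti: "\<forall>x\<in>LI. \<forall>y\<in>LI. le x y \<and> le y x \<longrightarrow> x = y"
    using adm unfolding admissible_order_def by (elim conjE) assumption
  have oneLI: "ione \<in> LI" by (simp add: ione_def LI_def)
  have key: "sugeno_val n m F G (\<lambda>_. X) \<sigma> = X" if sp: "sorting_perm le n (\<lambda>_. X) \<sigma>" for \<sigma>
  proof -
    have perm: "\<sigma> permutes {1..n}" using sp unfolding sorting_perm_def by auto
    have sub: "\<And>i. 1 \<le> i \<Longrightarrow> \<sigma> ` {i..n} \<subseteq> {1..n}"
    proof -
      fix i :: nat assume "1 \<le> i"
      then have "{i..n} \<subseteq> {1..n}" by auto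
      then have "\<sigma> ` {i..n} \<subseteq> \<sigma> ` {1..n}" by (rule image_mono)
      then show "\<sigma> ` {i..n} \<subseteq> {1..n}" using perm permutes_image by blast
    qed
    have E1: "\<sigma> ` {1..n} = {1..n}" using perm permutes_image by blast
    define xs where "xs = map (\<lambda>i. F X (m (\<sigma> ` {i..n}))) [1..<n+1]"
    have val: "sugeno_val n m F G (\<lambda>_. X) \<sigma> = G xs" unfolding sugeno_val_def xs_def by simp
    have len: "length xs = n" unfolding xs_def by simp
    have setLI: "set xs \<subseteq> LI" unfolding xs_def using F_range X mLI[OF sub] by fastforce
    have ups: "[1..<n+1] = 1 # [Suc 1..<n+1]" using n by (intro upt_conv_Cons) simp
    have hd: "hd xs = F X ione" unfolding xs_def ups using E1 m1 by simp
    have hdin: "hd xs \<in> set xs" using len n by (cases xs) auto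
    show ?thesis
    proof -
      consider (a) "(\<forall>X\<in>LI. F X ione = X) \<and> (\<forall>xs. length xs = n \<and> set xs \<subseteq> LI \<longrightarrow> G xs = hd xs)"
        | (b) "(\<forall>X\<in>LI. F X ione = X) \<and>
          (\<forall>X\<in>LI. \<forall>Y\<in>LI. \<forall>Z\<in>LI. le Y Z \<longrightarrow> le (F X Y) (F X Z)) \<and>
          (\<forall>xs. length xs = n \<and> set xs \<subseteq> LI \<longrightarrow> G xs = lmax le xs)"
        | (c) "(\<forall>X\<in>LI. G (replicate n X) = X) \<and> (\<forall>X\<in>LI. \<forall>Y\<in>LI. F X Y = X)"
        using cases by blast
      then show ?thesis
      proof cases
        case a then show ?thesis using val len setLI hd X by simp
      next
        case b
        have hdX: "hd xs = X" using hd b X by simp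
        have bound: "\<forall>z\<in>set xs. le z X"
        proof
          fix z assume "z \<in> set xs"
          then obtain i where z: "z = F X (m (\<sigma> ` {i..n}))" and i: "1 \<le> i" unfolding xs_def by auto
          note sub = sub[OF i]
          have "le (m (\<sigma> ` {i..n})) ione" using mmono[OF sub] m1 by simp
          moreover have "m (\<sigma> ` {i..n}) \<in> LI" using mLI[OF sub] .
          moreover have "\<forall>Y\<in>LI. \<forall>Z\<in>LI. le Y Z \<longrightarrow> le (F X Y) (F X Z)" using b X by blast
          ultimately have "le z (F X ione)" using oneLI z by simp
          then show "le z X" using b X by simp
        qed
        have "lmax le xs = X" unfolding lmax_def
        proof (rule the_equality)
          show "X \<in> set xs \<and> (\<forall>z\<in>set xs. le z X)" using hdin hdX bound by simp
        next
          fix y assume y: "y \<in> set xs \<and> (\<forall>z\<in>set xs. le z y)"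
          then have "le X y" "le y X" using hdin hdX bound by auto
          moreover have "y \<in> LI" using y setLI by blast
          ultimately show "y = X" using anti X by simp
        qed
        then show ?thesis using val len setLI b by simp
      next
        case c
        have "xs = map (\<lambda>i. X) [1..<n+1]" unfolding xs_def
          by (rule map_cong) (use c X mLI[OF sub] in auto)
        then have "xs = replicate n X" by (simp add: map_replicate_const)
        then show ?thesis using val c X by simp
      qed
    qed
  qed
  have "sorting_perm le n (\<lambda>_. X) id"
    unfolding sorting_perm_def using refl X by (simp add: permutes_id)
  then have "sorting_perm le n (\<lambda>_. X) (SOME \<sigma>. sorting_perm le n (\<lambda>_. X) \<sigma>)" by (metis someI)
  then have "sugeno le n m F G (\<lambda>_. X) = X" unfolding sugeno_def by (rule key)
  then show "sugeno le n m F G (\<lambda>_. X) = X \<and>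
              (\<forall>\<sigma>. sorting_perm le n (\<lambda>_. X) \<sigma> \<longrightarrow> sugeno_val n m F G (\<lambda>_. X) \<sigma> = X)"
    using key by blast
qed

end
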